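(* Let $\lambda,\mathfrak{g}_s>0$ and let $\alpha$ be a positive real root of $\alpha^3-\lambda\alpha+\mathfrak{g}_s=0$ with $2\alpha^3>\mathfrak{g}_s$; set $\Sigma=\tfrac12\sqrt{4\alpha^2-2\mathfrak{g}_s/\alpha}>0$. For $T>0$ define $$Z_1(T)=\alpha+\frac{\Sigma^2}{\sinh(\Sigma T)\,[\Sigma\cosh(\Sigma T)+\alpha\sinh(\Sigma T)]},\qquad Z_0(T)=\frac{\mathfrak{g}_s}{2\alpha}\Big(1-\frac{\Sigma^2}{[\Sigma\cosh(\Sigma T)+\alpha\sinh(\Sigma T)]^2}\Big).$$ Then $Z_1(T)\to\alpha$ as $T\to\infty$, and for all $T>0$: $$Z_1'(T)=\lambda-Z_1(T)^2-2Z_0(T),\qquad Z_0'(T)=2Z_1(T)Z_0(T)-\mathfrak{g}_s,$$ $$Z_1'(T)=-\bar W(Z_1(T)),\qquad Z_0(T)=\mathfrak{g}_s\,W_{\lambda,\mathfrak{g}_s}(Z_1(T)),$$ where $\bar W(X)=(X-\alpha)\sqrt{(X+\alpha)^2-2\mathfrak{g}_s/\alpha}$ and $W_{\lambda,\mathfrak{g}_s}(X)=\dfrac{-(X^2-\lambda)+(X-\alpha)\sqrt{(X+\alpha)^2-2\mathfrak{g}_s/\alpha}}{2\mathfrak{g}_s}$ (positive square roots, $X>\alpha$).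
   Context: These functions are the continuum (scaling) limits of generating functions of labeled trees encoding quadrangulations with a weight $\mathfrak{g}=\mathfrak{g}_s\epsilon^3$ per local maximum of the distance labeling, with $g=\tfrac14(1-\lambda\epsilon^2)$ and distance $t=T/\epsilon$; the claim itself is an identity about the explicit functions above. *)

theory Defs
  imports Complex_Main
begin

definition Wbar :: "real \<Rightarrow> real \<Rightarrow> real \<Rightarrow> real" where
  "Wbar \<alpha> gs X = (X - \<alpha>) * sqrt ((X + \<alpha>)^2 - 2 * gs / \<alpha>)"

definition Wlg :: "real \<Rightarrow> real \<Rightarrow> real \<Rightarrow> real \<Rightarrow> real" where
  "Wlg lam \<alpha> gs X = (- (X^2 - lam) + (X - \<alpha>) * sqrt ((X + \<alpha>)^2 - 2 * gs / \<alpha>)) / (2 * gs)"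

end

theory Submission
  imports Defs "HOL-Real_Asymp.Real_Asymp"
begin

lemma alg1:
  fixes s c D S a :: real
  assumes "s>0" "D = S*c+a*s" "c^2 = 1+s^2" "S>0" "a>0" "c>0"
  shows "-(S^2*(S*c*D + s*(S*S*s+a*S*c)))/(s*D)^2 = (3*a^2-2*S^2) - (a + S^2/(s*D))^2 - 2*((a^2-S^2)*(1 - S^2/D^2))"
proof -
  have D: "D > 0" using assms by (simp add: add_pos_pos)
  show ?thesis using assms(1,3) D by (simp add: field_simps) (algebra add: assms(2))
qed
lemma alg2:
  fixes s c D S a :: real
  assumes "s>0" "D = S*c+a*s" "c^2 = 1+s^2" "S>0" "a>0" "c>0"
  shows "(a^2-S^2) * (2*S^2*(S*S*s+a*S*c)/D^3) = 2*(a + S^2/(s*D))*((a^2-S^2)*(1 - S^2/D^2)) - 2*a*(a^2-S^2)"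
proof -
  have D: "D > 0" using assms by (simp add: add_pos_pos)
  show ?thesis using assms(1,3) D by (simp add: field_simps) (algebra add: assms(2))
qed
lemma alg3:
  fixes s c D S a :: real
  assumes "s>0" "D = S*c+a*s" "c^2 = 1+s^2" "S>0" "a>0" "c>0"
  shows "((a + S^2/(s*D)) + a)^2 - 4*(a^2-S^2) = (S*(S*c^2+2*a*s*c+S*s^2)/(s*D))^2"
proof -
  have D: "D > 0" using assms by (simp add: add_pos_pos)
  show ?thesis using assms(1,3) D by (simp add: field_simps) (algebra add: assms(2))
qed

lemma derZ1:
  fixes S a T :: real
  assumes "S>0" "a>0" "T>0"
  shows "((\<lambda>T. a + S^2 / (sinh (S * T) * (S * cosh (S * T) + a * sinh (S * T)))) has_real_derivative
     -(S^2 * (S*cosh (S*T)*(S * cosh (S * T) + a * sinh (S * T)) + sinh (S*T)*(S*S*sinh (S*T) + a*S*cosh (S*T))))/(sinh (S * T) * (S * cosh (S * T) + a * sinh (S * T)))^2) (at T)"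
proof -
  have s: "sinh (S*T) > 0" using assms by simp
  have c: "cosh (S*T) > 0" by simp
  have D: "S * cosh (S * T) + a * sinh (S * T) > 0" using assms s c by (simp add: add_pos_pos)
  show ?thesis
    apply (intro derivative_eq_intros refl)
    apply (simp_all only: mult_zero_left mult_1_left add_0_left mult_zero_right add_0_right)
    using assms apply simp
    using D apply linarith
    apply (simp add: power2_eq_square)
    done
qed

lemma derZ0:
  fixes S a T k :: real
  assumes "S>0" "a>0" "T>0"
  shows "((\<lambda>T. k * (1 - S^2 / (S * cosh (S * T) + a * sinh (S * T))^2)) has_real_derivative
     k * (2*S^2*(S*S*sinh (S*T)+a*S*cosh (S*T))/(S * cosh (S * T) + a * sinh (S * T))^3)) (at T)"
proof -
  have s: "sinh (S*T) > 0" using assms by simp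
  have c: "cosh (S*T) > 0" by simp
  define X where "X = S * cosh (S * T) + a * sinh (S * T)"
  have D: "X > 0" using assms s c unfolding X_def by (simp add: add_pos_pos)
  show ?thesis
    apply (intro derivative_eq_intros refl)
    apply (simp_all only: mult_zero_left mult_1_left add_0_left mult_zero_right add_0_right X_def[symmetric])
    using D apply simp
    using D apply (simp add: field_simps power2_eq_square power3_eq_cube)
    done
qed

theorem mainTheorem9:
  fixes lam gs \<alpha> \<Sigma> :: real and Z1 Z0 :: "real \<Rightarrow> real"
  assumes "lam > 0" and "gs > 0" and "\<alpha> > 0"
    and "\<alpha>^3 - lam * \<alpha> + gs = 0" and "2 * \<alpha>^3 > gs"
    and \<Sigma>_def: "\<Sigma> = sqrt (4 * \<alpha>^2 - 2 * gs / \<alpha>) / 2"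
    and Z1_def: "Z1 = (\<lambda>T. \<alpha> + \<Sigma>^2 / (sinh (\<Sigma> * T) * (\<Sigma> * cosh (\<Sigma> * T) + \<alpha> * sinh (\<Sigma> * T))))"
    and Z0_def: "Z0 = (\<lambda>T. gs / (2 * \<alpha>) * (1 - \<Sigma>^2 / (\<Sigma> * cosh (\<Sigma> * T) + \<alpha> * sinh (\<Sigma> * T))^2))"
  shows "\<Sigma> > 0 \<and> (Z1 \<longlongrightarrow> \<alpha>) at_top \<and>
    (\<forall>T > 0.
       (Z1 has_real_derivative (lam - (Z1 T)^2 - 2 * Z0 T)) (at T) \<and>
       (Z0 has_real_derivative (2 * Z1 T * Z0 T - gs)) (at T) \<and>
       (Z1 has_real_derivative (- Wbar \<alpha> gs (Z1 T))) (at T) \<and>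
       Z0 T = gs * Wlg lam \<alpha> gs (Z1 T))"
proof -
  have a: "\<alpha> > 0" by fact
  have pos: "4 * \<alpha>^2 - 2 * gs / \<alpha> > 0"
  proof -
    have "4 * \<alpha>^2 - 2 * gs / \<alpha> = (4*\<alpha>^3 - 2*gs)/\<alpha>" using a by (simp add: field_simps power2_eq_square power3_eq_cube)
    also have "\<dots> > 0" using assms(5) a by simp
    finally show ?thesis .
  qed
  have Spos: "\<Sigma> > 0" unfolding \<Sigma>_def using pos by simp
  have S2: "\<Sigma>^2 = \<alpha>^2 - gs/(2*\<alpha>)" unfolding \<Sigma>_def using pos
    by (simp add: power_divide)
  have k: "gs / (2*\<alpha>) = \<alpha>^2 - \<Sigma>^2" using S2 by simp
  have g2: "2 * gs / \<alpha> = 4 * (\<alpha>^2 - \<Sigma>^2)" using k a by (simp add: field_simps)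
  have lam: "lam = 3*\<alpha>^2 - 2*\<Sigma>^2"
  proof -
    have "lam * \<alpha> = \<alpha>^3 + gs" using assms(4) by simp
    hence "lam = \<alpha>^2 + gs/\<alpha>" using a by (simp add: field_simps power2_eq_square power3_eq_cube)
    thus ?thesis using g2 by simp
  qed
  have lim: "(Z1 \<longlongrightarrow> \<alpha>) at_top" unfolding Z1_def using Spos a by real_asymp
  have main: "(Z1 has_real_derivative (lam - (Z1 T)^2 - 2 * Z0 T)) (at T) \<and>
       (Z0 has_real_derivative (2 * Z1 T * Z0 T - gs)) (at T) \<and>
       (Z1 has_real_derivative (- Wbar \<alpha> gs (Z1 T))) (at T) \<and>
       Z0 T = gs * Wlg lam \<alpha> gs (Z1 T)" if T: "T > 0" for T
  proof -
    define s where "s = sinh (\<Sigma>*T)"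
    define c where "c = cosh (\<Sigma>*T)"
    define D where "D = \<Sigma>*c + \<alpha>*s"
    have s: "s > 0" unfolding s_def using Spos T by simp
    have c: "c > 0" unfolding c_def by simp
    have cs: "c^2 = 1 + s^2" unfolding c_def s_def by (simp add: cosh_square_eq)
    have Dp: "D > 0" unfolding D_def using s c Spos a by (simp add: add_pos_pos)
    have Z1T: "Z1 T = \<alpha> + \<Sigma>^2/(s*D)" unfolding Z1_def s_def c_def D_def by simp
    have Z0T: "Z0 T = (\<alpha>^2 - \<Sigma>^2) * (1 - \<Sigma>^2/D^2)" unfolding Z0_def s_def c_def D_def k by simp
    have Z0f: "Z0 = (\<lambda>T. (\<alpha>^2 - \<Sigma>^2) * (1 - \<Sigma>^2 / (\<Sigma> * cosh (\<Sigma> * T) + \<alpha> * sinh (\<Sigma> * T))^2))"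
      unfolding Z0_def k ..
    have d1: "(Z1 has_real_derivative -(\<Sigma>^2*(\<Sigma>*c*D + s*(\<Sigma>*\<Sigma>*s+\<alpha>*\<Sigma>*c)))/(s*D)^2) (at T)"
      unfolding Z1_def s_def c_def D_def by (rule derZ1[OF Spos a T])
    have d0: "(Z0 has_real_derivative (\<alpha>^2-\<Sigma>^2) * (2*\<Sigma>^2*(\<Sigma>*\<Sigma>*s+\<alpha>*\<Sigma>*c)/D^3)) (at T)"
      unfolding Z0f s_def c_def D_def by (rule derZ0[OF Spos a T])
    have e1: "-(\<Sigma>^2*(\<Sigma>*c*D + s*(\<Sigma>*\<Sigma>*s+\<alpha>*\<Sigma>*c)))/(s*D)^2 = lam - (Z1 T)^2 - 2 * Z0 T"
      unfolding Z1T Z0T lam by (rule alg1[OF s D_def cs Spos a c])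
    have e0: "(\<alpha>^2-\<Sigma>^2) * (2*\<Sigma>^2*(\<Sigma>*\<Sigma>*s+\<alpha>*\<Sigma>*c)/D^3) = 2 * Z1 T * Z0 T - gs"
    proof -
      have "gs = 2*\<alpha>*(\<alpha>^2-\<Sigma>^2)" using k a by (simp add: field_simps)
      thus ?thesis unfolding Z1T Z0T using alg2[OF s D_def cs Spos a c] by simp
    qed
    define R where "R = \<Sigma>*(\<Sigma>*c^2+2*\<alpha>*s*c+\<Sigma>*s^2)/(s*D)"
    have Rpos: "R \<ge> 0" unfolding R_def using Spos a s c Dp by simp
    have sq: "sqrt ((Z1 T + \<alpha>)^2 - 2 * gs / \<alpha>) = R"
      unfolding g2 using alg3[OF s D_def cs Spos a c] Rpos unfolding Z1T R_def[symmetric]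
      by (simp add: real_sqrt_abs)
    have WB: "Wbar \<alpha> gs (Z1 T) = (Z1 T - \<alpha>) * R" unfolding Wbar_def sq ..
    have e2: "-(\<Sigma>^2*(\<Sigma>*c*D + s*(\<Sigma>*\<Sigma>*s+\<alpha>*\<Sigma>*c)))/(s*D)^2 = - Wbar \<alpha> gs (Z1 T)"
      unfolding WB unfolding Z1T R_def D_def using s Dp[unfolded D_def]
      by (simp add: field_simps power2_eq_square) (simp add: minus_divide_left algebra_simps)
    have e3: "Z0 T = gs * Wlg lam \<alpha> gs (Z1 T)"
    proof -
      have h: "lam - (Z1 T)^2 - 2*Z0 T = - ((Z1 T - \<alpha>)*R)" using e1 e2 WB by simp
      have "gs * Wlg lam \<alpha> gs (Z1 T) = (- ((Z1 T)^2 - lam) + (Z1 T - \<alpha>) * R)/2"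
        unfolding Wlg_def sq using assms(2) by simp
      thus ?thesis using h by simp
    qed
    show ?thesis using d1 d0 e1 e0 e2 e3 by simp
  qed
  show ?thesis using Spos lim main by blast
qed

end
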